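(* Let $1\leq a\leq n$ be integers and let $p(n)$ denote the number of partitions of $n$ (the number of integer sequences $\lambda_1\geq\lambda_2\geq\dots\geq\lambda_k\geq 1$ with $\sum_{i=1}^k\lambda_i=n$). There exists a family $\mathcal{S}\subseteq 2^{[n]}$ of subsets of $[n]=\{1,\dots,n\}$ with $|\mathcal{S}|\leq p(n)\,a\,(n/a+1)^a$ such that the poset $(\mathcal{S},\subseteq)$ contains every $n$-element poset that does not have an antichain of size $a+1$.
   Context: A poset $(U,\leq)$ contains a poset $(P,\preceq)$ if there is a subset $P'\subseteq U$ such that $(P',\leq)$ (the restriction of $\leq$ to $P'$) is isomorphic to $(P,\preceq)$; i.e. containment is as an induced subposet. An antichain is a set of pairwise incomparable elements. *)

theory Defs
  imports Complex_Main
begin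

definition partition_count :: "nat \<Rightarrow> nat" where
  "partition_count n = card {xs :: nat list. sorted_wrt (\<ge>) xs \<and> (\<forall>x\<in>set xs. 1 \<le> x) \<and> sum_list xs = n}"

definition is_antichain :: "'a set \<Rightarrow> ('a \<times> 'a) set \<Rightarrow> 'a set \<Rightarrow> bool" where
  "is_antichain P r A \<longleftrightarrow> A \<subseteq> P \<and>
     (\<forall>x\<in>A. \<forall>y\<in>A. x \<noteq> y \<longrightarrow> (x, y) \<notin> r \<and> (y, x) \<notin> r)"

definition contains_poset :: "'b set set \<Rightarrow> 'a set \<Rightarrow> ('a \<times> 'a) set \<Rightarrow> bool" where
  "contains_poset U P r \<longleftrightarrow> (\<exists>f. inj_on f P \<and> f ` P \<subseteq> U \<and>
     (\<forall>x\<in>P. \<forall>y\<in>P. (x, y) \<in> r \<longleftrightarrow> f x \<subseteq> f y))"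

end

theory Submission
  imports Defs
begin


definition chain_in :: "('a \<times> 'a) set \<Rightarrow> 'a set \<Rightarrow> bool" where
  "chain_in r C \<longleftrightarrow> (\<forall>x\<in>C. \<forall>y\<in>C. (x, y) \<in> r \<or> (y, x) \<in> r)"

lemma finite_maximal:
  assumes po: "partial_order_on Q r" and fin: "finite X" and ne: "X \<noteq> {}" and sub: "X \<subseteq> Q"
  shows "\<exists>m\<in>X. \<forall>y\<in>X. (m, y) \<in> r \<longrightarrow> y = m"
proof -
  define g where "g x = card {y\<in>X. (y, x) \<in> r}" for x
  have "Max (g ` X) \<in> g ` X" using fin ne by simp
  then obtain m where m: "m \<in> X" "g m = Max (g ` X)" by auto
  have "\<forall>y\<in>X. (m, y) \<in> r \<longrightarrow> y = m"
  proof (intro ballI impI)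
    fix y assume y: "y \<in> X" "(m, y) \<in> r"
    show "y = m"
    proof (rule ccontr)
      assume ne: "y \<noteq> m"
      have tr: "trans r" and an: "antisym r" and rf: "refl_on Q r" using po by (auto dest: partial_order_onD)
      have "{z\<in>X. (z, m) \<in> r} \<subseteq> {z\<in>X. (z, y) \<in> r}" using tr y by (auto dest: transD)
      moreover have "y \<in> {z\<in>X. (z, y) \<in> r}" using rf y sub by (auto simp: refl_on_def)
      moreover have "y \<notin> {z\<in>X. (z, m) \<in> r}" using an y ne by (auto dest: antisymD)
      ultimately have "{z\<in>X. (z, m) \<in> r} \<subset> {z\<in>X. (z, y) \<in> r}" by blast
      hence "g m < g y" unfolding g_def using fin by (intro psubset_card_mono) auto
      moreover have "g y \<le> Max (g ` X)" using fin y by simp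
      ultimately show False using m by simp
    qed
  qed
  thus ?thesis using m by blast
qed

lemma antichain_mono: "is_antichain P r A \<Longrightarrow> P \<subseteq> P' \<Longrightarrow> is_antichain P' r A"
  unfolding is_antichain_def by blast

lemma antichain_sub: "is_antichain P r A \<Longrightarrow> B \<subseteq> A \<Longrightarrow> is_antichain P r B"
  unfolding is_antichain_def by blast

lemma antichain_card:
  assumes "is_antichain P r A" "finite P" "j \<le> card A"
  shows "\<exists>B. is_antichain P r B \<and> card B = j"
proof -
  obtain B where "B \<subseteq> A" "card B = j" using obtain_subset_with_card_n[OF assms(3)] by metis
  thus ?thesis using antichain_sub[OF assms(1)] by blast
qed

lemma antichain_chain_inter:
  assumes "is_antichain P r A" "chain_in r C"
  shows "card (A \<inter> C) \<le> 1"
proof -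
  have "\<forall>x\<in>A \<inter> C. \<forall>y\<in>A \<inter> C. x = y" using assms unfolding is_antichain_def chain_in_def by blast
  thus ?thesis by (metis card_le_Suc0_iff_eq finite_subset subsetI card.infinite zero_le_one One_nat_def)
qed

lemma pw_disj: "pairwise disjnt CC \<Longrightarrow> C \<in> CC \<Longrightarrow> D \<in> CC \<Longrightarrow> C \<noteq> D \<Longrightarrow> x \<in> C \<Longrightarrow> x \<in> D \<Longrightarrow> False"
  unfolding pairwise_def disjnt_def by blast

lemma dilworth:
  assumes po: "partial_order_on Q r"
  shows "finite P \<Longrightarrow> P \<subseteq> Q \<Longrightarrow> (\<forall>A. is_antichain P r A \<longrightarrow> card A \<le> k) \<Longrightarrow>
    \<exists>CC. finite CC \<and> card CC \<le> k \<and> \<Union>CC = P \<and> (\<forall>C\<in>CC. chain_in r C) \<and> pairwise disjnt CC"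
proof (induction "card P" arbitrary: P k rule: less_induct)
  case less
  have tr: "trans r" and an: "antisym r" and rf: "refl_on Q r" and rs: "r \<subseteq> Q \<times> Q"
    using po by (auto dest: partial_order_onD)
  show ?case
  proof (cases "P = {}")
    case True
    show ?thesis by (rule exI[of _ "{}"]) (simp add: True)
  next
    case False
    obtain m where m: "m \<in> P" "\<forall>y\<in>P. (m, y) \<in> r \<longrightarrow> y = m"
      using finite_maximal[OF po less.prems(1) False less.prems(2)] by blast
    have "is_antichain P r {m}" using m unfolding is_antichain_def by auto
    hence "card {m} \<le> k" using less.prems(3) by blast
    hence k1: "1 \<le> k" by simp
    define P' where "P' = P - {m}"
    have finP': "finite P'" using less.prems(1) P'_def by simp
    have P'sub: "P' \<subseteq> Q" using less.prems(2) P'_def by auto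
    have cardP': "card P' < card P" using m less.prems(1) P'_def by (metis card_Diff1_less)
    show ?thesis
    proof (cases "\<exists>A. is_antichain P' r A \<and> card A = k")
      case False
      have "\<forall>A. is_antichain P' r A \<longrightarrow> card A \<le> k - 1"
      proof (intro allI impI)
        fix A assume A: "is_antichain P' r A"
        show "card A \<le> k - 1"
        proof (rule ccontr)
          assume "\<not> card A \<le> k - 1"
          hence "k \<le> card A" by simp
          then show False using antichain_card[OF A finP'] False by blast
        qed
      qed
      note W = this
      obtain CC where CC: "finite CC" "card CC \<le> k - 1" "\<Union>CC = P'" "\<forall>C\<in>CC. chain_in r C" "pairwise disjnt CC"
        using less.hyps[OF cardP' finP' P'sub W] by blast
      show ?thesis
      proof (rule exI[of _ "insert {m} CC"], intro conjI)
        show "finite (insert {m} CC)" using CC by simp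
        have "card (insert {m} CC) \<le> Suc (card CC)" using CC(1) by (simp add: card_insert_if)
        thus "card (insert {m} CC) \<le> k" using CC(2) k1 by linarith
        show "\<Union> (insert {m} CC) = P" using CC(3) m(1) unfolding P'_def by blast
        have "(m, m) \<in> r" using rf m(1) less.prems(2) unfolding refl_on_def by blast
        hence "chain_in r {m}" unfolding chain_in_def by blast
        thus "\<forall>C\<in>insert {m} CC. chain_in r C" using CC(4) by blast
        have "\<forall>Y\<in>CC. disjnt {m} Y \<and> disjnt Y {m}" using CC(3) unfolding P'_def disjnt_def by blast
        thus "pairwise disjnt (insert {m} CC)" unfolding pairwise_insert using CC(5) by blast
      qed
    next
      case True
      then obtain A0 where A0: "is_antichain P' r A0" "card A0 = k" by blast
      have "\<forall>A. is_antichain P' r A \<longrightarrow> card A \<le> k"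
        using less.prems(3) antichain_mono P'_def by blast
      note W = this
      obtain CC where CC: "finite CC" "card CC \<le> k" "\<Union>CC = P'" "\<forall>C\<in>CC. chain_in r C" "pairwise disjnt CC"
        using less.hyps[OF cardP' finP' P'sub W] by blast
      have finC: "\<And>C. C \<in> CC \<Longrightarrow> finite C" using CC finP' by (meson Union_upper finite_subset)
      have meet: "card (A \<inter> C) = 1" if A: "is_antichain P' r A" "card A = k" and C: "C \<in> CC" for A C
      proof -
        have le1: "\<And>D. D \<in> CC \<Longrightarrow> card (A \<inter> D) \<le> 1" using antichain_chain_inter A CC by blast
        have Aeq: "A = (\<Union>D\<in>CC. A \<inter> D)" using A CC unfolding is_antichain_def by blast
        have cs: "card A = (\<Sum>D\<in>CC. card (A \<inter> D))"
          apply (subst Aeq)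
          apply (rule card_UN_disjoint)
          using CC finC apply (auto simp: pairwise_def disjnt_def)
          done
        show ?thesis
        proof (rule ccontr)
          assume "card (A \<inter> C) \<noteq> 1"
          hence "card (A \<inter> C) < 1" using le1 C by (meson le_neq_implies_less)
          hence "(\<Sum>D\<in>CC. card (A \<inter> D)) < (\<Sum>D\<in>CC. 1)"
            using CC(1) C le1 by (intro sum_strict_mono_ex1) auto
          hence "card A < card CC" using cs by simp
          thus False using A CC by simp
        qed
      qed
      define X where "X C = {z\<in>C. \<exists>A. is_antichain P' r A \<and> card A = k \<and> z \<in> A}" for C
      have Xne: "X C \<noteq> {}" if "C \<in> CC" for C
      proof -
        have "card (A0 \<inter> C) = 1" using meet A0 that by blast
        then obtain z where "z \<in> A0 \<inter> C" by (metis card_1_singletonE insertI1)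
        thus ?thesis using A0 unfolding X_def by blast
      qed
      have xex: "\<exists>x\<in>X C. \<forall>y\<in>X C. (y, x) \<in> r" if C: "C \<in> CC" for C
      proof -
        have "X C \<subseteq> Q" using C CC P'sub unfolding X_def by blast
        then obtain x where x: "x \<in> X C" "\<forall>y\<in>X C. (x, y) \<in> r \<longrightarrow> y = x"
          using finite_maximal[OF po _ Xne[OF C]] finC[OF C] unfolding X_def by force
        have "\<forall>y\<in>X C. (y, x) \<in> r"
        proof
          fix y assume y: "y \<in> X C"
          have "(x, y) \<in> r \<or> (y, x) \<in> r" using CC(4) C x(1) y unfolding X_def chain_in_def by blast
          thus "(y, x) \<in> r" using x y rf \<open>X C \<subseteq> Q\<close> by (auto simp: refl_on_def)
        qed
        thus ?thesis using x by blast
      qed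
      define xf where "xf C = (SOME x. x \<in> X C \<and> (\<forall>y\<in>X C. (y, x) \<in> r))" for C
      have xf0: "xf C \<in> X C \<and> (\<forall>y\<in>X C. (y, xf C) \<in> r)" if "C \<in> CC" for C
      proof -
        have "\<exists>x. x \<in> X C \<and> (\<forall>y\<in>X C. (y, x) \<in> r)" using xex[OF that] by blast
        thus ?thesis unfolding xf_def by (rule someI_ex)
      qed
      have xf: "xf C \<in> X C" "\<forall>y\<in>X C. (y, xf C) \<in> r" if "C \<in> CC" for C
        using xf0[OF that] by blast+
      have xfC1: "xf C \<in> C" if "C \<in> CC" for C using xf(1)[OF that] unfolding X_def by blast
      have xfC: "xf C \<in> C" "xf C \<in> P'" if "C \<in> CC" for C
        using xfC1[OF that] that CC(3) by blast+
      have xinj: "inj_on xf CC"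
      proof (rule inj_onI)
        fix C D assume CD: "C \<in> CC" "D \<in> CC" "xf C = xf D"
        show "C = D"
        proof (rule ccontr)
          assume "C \<noteq> D"
          hence "C \<inter> D = {}" using CC(5) CD(1,2) unfolding pairwise_def disjnt_def by blast
          moreover have "xf C \<in> C" "xf C \<in> D" using xfC1[OF CD(1)] xfC1[OF CD(2)] CD(3) by auto
          ultimately show False by blast
        qed
      qed
      have cardCC: "card CC = k"
      proof -
        have "k = (\<Sum>D\<in>CC. card (A0 \<inter> D))"
        proof -
          have Aeq: "A0 = (\<Union>D\<in>CC. A0 \<inter> D)" using A0 CC unfolding is_antichain_def by blast
          show ?thesis
            apply (subst A0(2)[symmetric])
            apply (subst Aeq)
            apply (rule card_UN_disjoint)
            using CC finC apply (auto simp: pairwise_def disjnt_def)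
            done
        qed
        also have "\<dots> = card CC" using meet A0 by simp
        finally show ?thesis by simp
      qed
      have notac: "\<not> is_antichain P r (insert m (xf ` CC))"
      proof
        assume "is_antichain P r (insert m (xf ` CC))"
        moreover have "m \<notin> xf ` CC" using xfC P'_def by auto
        hence "card (insert m (xf ` CC)) = k + 1"
          using CC(1) xinj cardCC by (simp add: card_image)
        moreover have "card (insert m (xf ` CC)) \<le> k" using less.prems(3) \<open>is_antichain P r (insert m (xf ` CC))\<close> by blast
        ultimately show False by simp
      qed
      have "\<forall>u\<in>xf ` CC. \<forall>v\<in>xf ` CC. u \<noteq> v \<longrightarrow> (u, v) \<notin> r \<and> (v, u) \<notin> r"
      proof (intro ballI impI)
        fix u v assume u: "u \<in> xf ` CC" and v: "v \<in> xf ` CC" and uv: "u \<noteq> v"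
        have key: "(xf C, xf D) \<notin> r" if C: "C \<in> CC" and D: "D \<in> CC" and CD: "C \<noteq> D" for C D
        proof
          assume cd: "(xf C, xf D) \<in> r"
          obtain B where B: "is_antichain P' r B" "card B = k" "xf D \<in> B"
            using xf(1)[OF D] unfolding X_def by blast
          have "card (B \<inter> C) = 1" using meet B C by blast
          then obtain y where y: "y \<in> B" "y \<in> C" by (metis card_1_singletonE insertI1 IntD1 IntD2)
          have "y \<in> X C" using y B unfolding X_def by blast
          hence "(y, xf C) \<in> r" using xf(2)[OF C] by blast
          hence yD: "(y, xf D) \<in> r" using cd tr by (auto dest: transD)
          have "y \<noteq> xf D" using pw_disj[OF CC(5) C D CD y(2)] xfC1[OF D] by blast
          thus False using B y yD unfolding is_antichain_def by blast
        qed
        from u v uv obtain C D where "C \<in> CC" "D \<in> CC" "C \<noteq> D" "u = xf C" "v = xf D" by auto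
        thus "(u, v) \<notin> r \<and> (v, u) \<notin> r" using key by blast
      qed
      moreover have "xf ` CC \<subseteq> P" using xfC P'_def by auto
      ultimately have "is_antichain P r (xf ` CC)" unfolding is_antichain_def by blast
      with notac obtain C where C: "C \<in> CC" and comp: "(xf C, m) \<in> r \<or> (m, xf C) \<in> r"
        using m unfolding is_antichain_def by blast
      have xm: "(xf C, m) \<in> r"
        using comp m xfC[OF C] P'_def by auto
      define K where "K = insert m {z\<in>C. (z, xf C) \<in> r}"
      define P'' where "P'' = P - K"
      have KP: "K \<subseteq> P" using K_def m CC C P'_def by auto
      have finP'': "finite P''" using less.prems(1) P''_def by simp
      have P''sub: "P'' \<subseteq> Q" using less.prems(2) P''_def by auto
      have cardP'': "card P'' < card P" using m less.prems(1) P''_def K_def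
        by (intro psubset_card_mono) auto
      have "\<forall>A. is_antichain P'' r A \<longrightarrow> card A \<le> k - 1"
      proof (intro allI impI)
        fix A assume A: "is_antichain P'' r A"
        show "card A \<le> k - 1"
        proof (rule ccontr)
          assume "\<not> card A \<le> k - 1"
          hence "k \<le> card A" by simp
          then obtain B where B: "is_antichain P'' r B" "card B = k" using antichain_card[OF A finP''] by blast
          have "P'' \<subseteq> P'" unfolding P''_def P'_def K_def by blast
          hence B': "is_antichain P' r B" using antichain_mono[OF B(1)] by blast
          have "card (B \<inter> C) = 1" using meet B' B(2) C by blast
          then obtain y where y: "y \<in> B" "y \<in> C" by (metis card_1_singletonE insertI1 IntD1 IntD2)
          have "y \<in> X C" using y B' B(2) unfolding X_def by blast
          hence "y \<in> K" using xf(2)[OF C] y K_def by blast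
          thus False using B(1) y P''_def unfolding is_antichain_def by blast
        qed
      qed
      note W = this
      obtain DD where DD: "finite DD" "card DD \<le> k - 1" "\<Union>DD = P''" "\<forall>D\<in>DD. chain_in r D" "pairwise disjnt DD"
        using less.hyps[OF cardP'' finP'' P''sub W] by blast
      show ?thesis
      proof (rule exI[of _ "insert K DD"], intro conjI)
        show "finite (insert K DD)" using DD by simp
        have "card (insert K DD) \<le> Suc (card DD)" using DD(1) by (simp add: card_insert_if)
        thus "card (insert K DD) \<le> k" using DD(2) k1 by linarith
        show "\<Union> (insert K DD) = P" using DD(3) KP unfolding P''_def by blast
        have "chain_in r K"
          unfolding chain_in_def
        proof (intro ballI)
          fix u v assume u: "u \<in> K" and v: "v \<in> K"
          have Cc: "chain_in r C" using CC C by blast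
          show "(u, v) \<in> r \<or> (v, u) \<in> r"
            using u v unfolding K_def
          proof (elim insertE)
            assume "u = m" "v = m" thus ?thesis using rf m less.prems(2) by (auto simp: refl_on_def)
          next
            assume "u = m" "v \<in> {z \<in> C. (z, xf C) \<in> r}"
            thus ?thesis using xm tr by (auto dest: transD)
          next
            assume "u \<in> {z \<in> C. (z, xf C) \<in> r}" "v = m"
            thus ?thesis using xm tr by (auto dest: transD)
          next
            assume "u \<in> {z \<in> C. (z, xf C) \<in> r}" "v \<in> {z \<in> C. (z, xf C) \<in> r}"
            thus ?thesis using Cc unfolding chain_in_def by blast
          qed
        qed
        thus "\<forall>D\<in>insert K DD. chain_in r D" using DD by blast
        have "\<forall>Y\<in>DD. disjnt K Y \<and> disjnt Y K" using DD(3) unfolding P''_def disjnt_def by blast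
        thus "pairwise disjnt (insert K DD)" unfolding pairwise_insert using DD(5) by blast
      qed
    qed
  qed
qed



fun fam :: "nat list \<Rightarrow> nat \<Rightarrow> nat set set" where
  "fam [] off = {{}}"
| "fam (l # ls) off = (\<lambda>(t, B). {off+1..off+t} \<union> B) ` ({0..l} \<times> fam ls (off + l))"

lemma fam_card: "finite (fam ls off) \<and> card (fam ls off) \<le> prod_list (map Suc ls)"
proof (induction ls arbitrary: off)
  case Nil
  then show ?case by simp
next
  case (Cons l ls)
  let ?A = "{0..l} \<times> fam ls (off + l)"
  have fin: "finite ?A" using Cons.IH by simp
  have "card (fam (l # ls) off) \<le> card ?A" by (simp add: card_image_le fin)
  also have "\<dots> = Suc l * card (fam ls (off + l))" by (simp add: card_cartesian_product)
  also have "\<dots> \<le> Suc l * prod_list (map Suc ls)" using Cons.IH[of "off + l"] by (intro mult_le_mono2) simp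
  finally show ?case using fin by simp
qed

lemma fam_sub: "B \<in> fam ls off \<Longrightarrow> B \<subseteq> {off+1..off + sum_list ls}"
proof (induction ls arbitrary: off B)
  case Nil
  then show ?case by simp
next
  case (Cons l ls)
  then obtain t B' where "t \<le> l" "B' \<in> fam ls (off + l)" "B = {off+1..off+t} \<union> B'" by auto
  moreover from this have "B' \<subseteq> {off + l + 1..off + l + sum_list ls}" using Cons.IH by blast
  ultimately show ?case by auto
qed

definition tcnt :: "(nat \<times> nat) set \<Rightarrow> nat set \<Rightarrow> nat \<Rightarrow> nat" where
  "tcnt r C x = card {z\<in>C. (z, x) \<in> r}"

fun setf :: "nat set list \<Rightarrow> nat \<Rightarrow> (nat \<times> nat) set \<Rightarrow> nat \<Rightarrow> nat set" where
  "setf [] off r x = {}"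
| "setf (C # Cs) off r x = {off+1..off + tcnt r C x} \<union> setf Cs (off + card C) r x"

lemma tcnt_le: "finite C \<Longrightarrow> tcnt r C x \<le> card C"
  unfolding tcnt_def by (intro card_mono) auto

lemma setf_fam: "(\<forall>C\<in>set Cs. finite C) \<Longrightarrow> setf Cs off r x \<in> fam (map card Cs) off"
proof (induction Cs arbitrary: off)
  case Nil
  then show ?case by simp
next
  case (Cons C Cs)
  have "tcnt r C x \<in> {0..card C}" using tcnt_le Cons.prems by simp
  moreover have "setf Cs (off + card C) r x \<in> fam (map card Cs) (off + card C)" using Cons by simp
  ultimately show ?case by force
qed

lemma setf_lb: "y \<in> setf Cs off r x \<Longrightarrow> off < y"
  by (induction Cs arbitrary: off) fastforce+

lemma interval_sub: "{(off::nat)+1..off+a} \<subseteq> {off+1..off+b} \<longleftrightarrow> a \<le> b"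
proof
  assume h: "{off+1..off+a} \<subseteq> {off+1..off+b}"
  show "a \<le> b"
  proof (rule ccontr)
    assume "\<not> a \<le> b"
    hence "off + a \<in> {off+1..off+a}" by simp
    with h show False using \<open>\<not> a \<le> b\<close> by auto
  qed
qed auto

lemma setf_le: "(\<forall>C\<in>set Cs. finite C) \<Longrightarrow>
   setf Cs off r x \<subseteq> setf Cs off r y \<longleftrightarrow> (\<forall>C\<in>set Cs. tcnt r C x \<le> tcnt r C y)"
proof (induction Cs arbitrary: off)
  case Nil
  then show ?case by simp
next
  case (Cons C Cs)
  let ?c = "card C"
  have fc: "finite C" using Cons.prems by simp
  define Ix where "Ix = {off+1..off + tcnt r C x}"
  define Iy where "Iy = {off+1..off + tcnt r C y}"
  define Rx where "Rx = setf Cs (off + ?c) r x"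
  define Ry where "Ry = setf Cs (off + ?c) r y"
  have Ixb: "Ix \<subseteq> {..off + ?c}" using tcnt_le[OF fc, of r x] unfolding Ix_def by auto
  have Iyb: "Iy \<subseteq> {..off + ?c}" using tcnt_le[OF fc, of r y] unfolding Iy_def by auto
  have Rxb: "Rx \<subseteq> {off + ?c<..}" unfolding Rx_def using setf_lb by blast
  have Ryb: "Ry \<subseteq> {off + ?c<..}" unfolding Ry_def using setf_lb by blast
  have "Ix \<union> Rx \<subseteq> Iy \<union> Ry \<longleftrightarrow> Ix \<subseteq> Iy \<and> Rx \<subseteq> Ry"
  proof
    assume h: "Ix \<union> Rx \<subseteq> Iy \<union> Ry"
    have "Ix \<subseteq> Iy"
    proof
      fix z assume "z \<in> Ix"
      hence "z \<in> Iy \<union> Ry" "z \<le> off + ?c" using h Ixb by auto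
      thus "z \<in> Iy" using Ryb by auto
    qed
    moreover have "Rx \<subseteq> Ry"
    proof
      fix z assume "z \<in> Rx"
      hence "z \<in> Iy \<union> Ry" "off + ?c < z" using h Rxb by auto
      thus "z \<in> Ry" using Iyb by auto
    qed
    ultimately show "Ix \<subseteq> Iy \<and> Rx \<subseteq> Ry" by blast
  qed blast
  moreover have "Ix \<subseteq> Iy \<longleftrightarrow> tcnt r C x \<le> tcnt r C y" unfolding Ix_def Iy_def by (rule interval_sub)
  moreover have "Rx \<subseteq> Ry \<longleftrightarrow> (\<forall>C\<in>set Cs. tcnt r C x \<le> tcnt r C y)"
    unfolding Rx_def Ry_def using Cons by simp
  ultimately show ?case unfolding Ix_def Iy_def Rx_def Ry_def by simp
qed

lemma chain_tcnt:
  assumes po: "partial_order_on P r" and ch: "\<forall>C\<in>CC. chain_in r C" and fin: "\<forall>C\<in>CC. finite C"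
    and cov: "\<Union>CC = P" and x: "x \<in> P" and y: "y \<in> P"
  shows "(\<forall>C\<in>CC. tcnt r C x \<le> tcnt r C y) \<longleftrightarrow> (x, y) \<in> r"
proof
  have tr: "trans r" and rf: "refl_on P r" using po by (auto dest: partial_order_onD)
  assume h: "\<forall>C\<in>CC. tcnt r C x \<le> tcnt r C y"
  obtain C where C: "C \<in> CC" "x \<in> C" using cov x by blast
  define Dx where "Dx = {z\<in>C. (z, x) \<in> r}"
  define Dy where "Dy = {z\<in>C. (z, y) \<in> r}"
  have nest: "Dx \<subseteq> Dy \<or> Dy \<subseteq> Dx"
  proof (rule ccontr)
    assume "\<not> (Dx \<subseteq> Dy \<or> Dy \<subseteq> Dx)"
    then obtain u v where u: "u \<in> Dx" "u \<notin> Dy" and v: "v \<in> Dy" "v \<notin> Dx" by blast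
    have "(u, v) \<in> r \<or> (v, u) \<in> r" using ch C u v unfolding Dx_def Dy_def chain_in_def by blast
    thus False
    proof
      assume "(u, v) \<in> r"
      hence "(u, y) \<in> r" using v tr unfolding Dy_def by (auto dest: transD)
      thus False using u unfolding Dx_def Dy_def by blast
    next
      assume "(v, u) \<in> r"
      hence "(v, x) \<in> r" using u tr unfolding Dx_def by (auto dest: transD)
      thus False using v unfolding Dx_def Dy_def by blast
    qed
  qed
  have fC: "finite C" using fin C by blast
  have "card Dx \<le> card Dy" using h C unfolding tcnt_def Dx_def Dy_def by blast
  hence "Dx \<subseteq> Dy"
  proof -
    assume le: "card Dx \<le> card Dy"
    { assume "\<not> Dx \<subseteq> Dy"
      hence "Dy \<subset> Dx" using nest by blast
      hence "card Dy < card Dx" using fC unfolding Dx_def by (intro psubset_card_mono) auto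
      hence False using le by simp }
    thus ?thesis by blast
  qed
  moreover have "x \<in> Dx" using C x rf unfolding Dx_def refl_on_def by blast
  ultimately show "(x, y) \<in> r" unfolding Dy_def by blast
next
  have tr: "trans r" using po by (auto dest: partial_order_onD)
  assume xy: "(x, y) \<in> r"
  show "\<forall>C\<in>CC. tcnt r C x \<le> tcnt r C y"
  proof
    fix C assume C: "C \<in> CC"
    have "{z\<in>C. (z, x) \<in> r} \<subseteq> {z\<in>C. (z, y) \<in> r}" using xy tr by (auto dest: transD)
    thus "tcnt r C x \<le> tcnt r C y" unfolding tcnt_def using fin C by (intro card_mono) auto
  qed
qed



lemma pt_exp: "(c::real) > 0 \<Longrightarrow> t \<le> c * exp (t / c - 1)"
proof -
  assume c: "c > 0"
  have "1 + (t / c - 1) \<le> exp (t / c - 1)" by (rule exp_ge_add_one_self)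
  hence "c * (t / c) \<le> c * exp (t / c - 1)" using c by (intro mult_left_mono) auto
  thus ?thesis using c by simp
qed

lemma prod_exp_bound:
  fixes c :: real
  assumes c: "c > 0"
  shows "real (prod_list (map Suc ys)) \<le> c ^ length ys * exp ((real (sum_list ys) + length ys) / c - length ys)"
proof (induction ys)
  case Nil
  then show ?case by simp
next
  case (Cons y ys)
  have "real (prod_list (map Suc (y # ys))) = real (Suc y) * real (prod_list (map Suc ys))" by (simp add: algebra_simps)
  also have "\<dots> \<le> (c * exp (real (Suc y) / c - 1)) * (c ^ length ys * exp ((real (sum_list ys) + length ys) / c - length ys))"
    using Cons.IH pt_exp[OF c, of "real (Suc y)"] by (intro mult_mono) auto
  also have "\<dots> = c ^ length (y # ys) * (exp (real (Suc y) / c - 1) * exp ((real (sum_list ys) + length ys) / c - length ys))"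
    by simp
  also have "exp (real (Suc y) / c - 1) * exp ((real (sum_list ys) + length ys) / c - length ys)
      = exp ((real (sum_list (y # ys)) + length (y # ys)) / c - length (y # ys))"
    by (simp add: exp_add[symmetric] add_divide_distrib)
  finally show ?case .
qed

lemma amgm_list:
  assumes "length ys = m" "m > 0"
  shows "real (prod_list (map Suc ys)) \<le> (real (sum_list ys) / m + 1) ^ m"
proof -
  define c where "c = real (sum_list ys) / m + 1"
  have "real (sum_list ys) / m \<ge> 0" by simp
  hence c: "c > 0" unfolding c_def by linarith
  have "(real (sum_list ys) + m) / c = m" unfolding c_def using assms by (simp add: field_simps)
  thus ?thesis using prod_exp_bound[OF c, of ys] assms unfolding c_def by simp
qed

lemma amgm_pad:
  assumes "length xs \<le> a" "a > 0"
  shows "real (prod_list (map Suc xs)) \<le> (real (sum_list xs) / a + 1) ^ a"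
proof -
  define ys where "ys = xs @ replicate (a - length xs) 0"
  have "length ys = a" unfolding ys_def using assms by simp
  moreover have "prod_list (map Suc ys) = prod_list (map Suc xs)" unfolding ys_def by simp
  moreover have "sum_list ys = sum_list xs" unfolding ys_def by simp
  ultimately show ?thesis using amgm_list[of ys a] assms by simp
qed

lemma len_le_sum: "(\<forall>x\<in>set xs. 1 \<le> (x::nat)) \<Longrightarrow> length xs \<le> sum_list xs"
  by (induction xs) auto

lemma parts_finite: "finite {xs :: nat list. sorted_wrt (\<ge>) xs \<and> (\<forall>x\<in>set xs. 1 \<le> x) \<and> sum_list xs = n}"
proof (rule finite_subset)
  show "{xs :: nat list. sorted_wrt (\<ge>) xs \<and> (\<forall>x\<in>set xs. 1 \<le> x) \<and> sum_list xs = n}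
        \<subseteq> {xs. set xs \<subseteq> {0..n} \<and> length xs \<le> n}"
    using len_le_sum member_le_sum_list by fastforce
  show "finite {xs. set xs \<subseteq> {0..n} \<and> length xs \<le> n}" by (rule finite_lists_length_le) simp
qed

theorem lemma3p1:
  fixes a n :: nat
  assumes "1 \<le> a" and "a \<le> n"
  shows "\<exists>S :: nat set set. S \<subseteq> Pow {1..n} \<and>
     real (card S) \<le> real (partition_count n) * real a * (real n / real a + 1) ^ a \<and>
     (\<forall>(P :: nat set) (r :: (nat \<times> nat) set).
        card P = n \<and> partial_order_on P r \<and>
        \<not> (\<exists>A. is_antichain P r A \<and> card A = a + 1)
        \<longrightarrow> contains_poset S P r)"
proof -
  define Parts where "Parts = {xs :: nat list. sorted_wrt (\<ge>) xs \<and> (\<forall>x\<in>set xs. 1 \<le> x) \<and> sum_list xs = n}"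
  define PA where "PA = {xs \<in> Parts. length xs \<le> a}"
  define S where "S = (\<Union>l\<in>PA. fam l 0)"
  have finParts: "finite Parts" unfolding Parts_def by (rule parts_finite)
  have finPA: "finite PA" unfolding PA_def using finParts by simp
  have a0: "a > 0" using assms by simp
  have Ssub: "S \<subseteq> Pow {1..n}"
  proof
    fix B assume "B \<in> S"
    then obtain l where l: "l \<in> PA" "B \<in> fam l 0" unfolding S_def by blast
    have "sum_list l = n" using l(1) unfolding PA_def Parts_def by blast
    thus "B \<in> Pow {1..n}" using fam_sub[OF l(2)] by simp
  qed
  have cardS: "real (card S) \<le> real (partition_count n) * real a * (real n / real a + 1) ^ a"
  proof -
    have "card S \<le> (\<Sum>l\<in>PA. card (fam l 0))" unfolding S_def using finPA by (rule card_UN_le)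
    hence "real (card S) \<le> (\<Sum>l\<in>PA. real (card (fam l 0)))" by (metis of_nat_le_iff of_nat_sum)
    also have "\<dots> \<le> (\<Sum>l\<in>PA. (real n / real a + 1) ^ a)"
    proof (rule sum_mono)
      fix l assume l: "l \<in> PA"
      have "real (card (fam l 0)) \<le> real (prod_list (map Suc l))" using fam_card[of l 0] by simp
      also have "\<dots> \<le> (real (sum_list l) / a + 1) ^ a" using l a0 unfolding PA_def by (intro amgm_pad) auto
      also have "sum_list l = n" using l unfolding PA_def Parts_def by blast
      finally show "real (card (fam l 0)) \<le> (real n / real a + 1) ^ a" .
    qed
    also have "\<dots> = real (card PA) * (real n / real a + 1) ^ a" by simp
    also have "\<dots> \<le> real (partition_count n) * (real n / real a + 1) ^ a"
    proof (rule mult_right_mono)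
      have "card PA \<le> card Parts" unfolding PA_def using finParts by (intro card_mono) auto
      thus "real (card PA) \<le> real (partition_count n)" unfolding partition_count_def Parts_def by simp
    qed simp
    also have "\<dots> \<le> real (partition_count n) * real a * (real n / real a + 1) ^ a"
    proof -
      have "real (partition_count n) * (real n / real a + 1) ^ a * 1
          \<le> real (partition_count n) * (real n / real a + 1) ^ a * real a"
        using a0 by (intro mult_left_mono) auto
      thus ?thesis by (simp add: algebra_simps)
    qed
    finally show ?thesis .
  qed
  have emb: "contains_poset S P r"
    if P: "card P = n" and po: "partial_order_on P r" and noA: "\<not> (\<exists>A. is_antichain P r A \<and> card A = a + 1)"
    for P :: "nat set" and r
  proof -
    have finP: "finite P" using P assms by (intro card_ge_0_finite) simp
    have allA: "\<forall>A. is_antichain P r A \<longrightarrow> card A \<le> a"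
    proof (intro allI impI)
      fix A assume A: "is_antichain P r A"
      show "card A \<le> a"
      proof (rule ccontr)
        assume "\<not> card A \<le> a"
        hence "a + 1 \<le> card A" by simp
        thus False using antichain_card[OF A finP] noA by blast
      qed
    qed
    obtain CC where CC: "finite CC" "card CC \<le> a" "\<Union>CC = P" "\<forall>C\<in>CC. chain_in r C" "pairwise disjnt CC"
      using dilworth[OF po finP subset_refl allA] by blast
    define CC1 where "CC1 = CC - {{}}"
    have CC1: "finite CC1" "card CC1 \<le> a" "\<Union>CC1 = P" "\<forall>C\<in>CC1. chain_in r C" "pairwise disjnt CC1"
      using CC unfolding CC1_def
      by (auto intro: pairwise_subset le_trans[OF card_mono[of CC "CC - {{}}"]])
    have finC: "\<forall>C\<in>CC1. finite C" using CC1(3) finP by (meson Union_upper finite_subset)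
    have neC: "\<forall>C\<in>CC1. C \<noteq> {}" unfolding CC1_def by blast
    obtain xs where xs: "set xs = CC1" "distinct xs" using finite_distinct_list[OF CC1(1)] by blast
    define ys where "ys = rev (sort_key card xs)"
    have ys: "set ys = CC1" "distinct ys" unfolding ys_def using xs by auto
    define lam where "lam = map card ys"
    have sorted: "sorted_wrt (\<ge>) lam"
    proof -
      have "sorted (map card (sort_key card xs))" by simp
      thus ?thesis unfolding lam_def ys_def by (simp add: rev_map[symmetric] sorted_wrt_rev sorted_wrt_map)
    qed
    have pos: "\<forall>x\<in>set lam. 1 \<le> x" unfolding lam_def using ys(1) finC neC
      by (auto simp: Suc_le_eq card_gt_0_iff)
    have sumlam: "sum_list lam = n"
    proof -
      have "sum_list lam = sum card CC1" unfolding lam_def using ys by (simp add: sum_list_distinct_conv_sum_set)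
      also have "\<dots> = card (\<Union>CC1)" using CC1(5) finC by (simp add: card_Union_disjoint)
      finally show ?thesis using CC1(3) P by simp
    qed
    have lenlam: "length lam \<le> a" unfolding lam_def using ys CC1(2) by (simp add: distinct_card[symmetric])
    have lamPA: "lam \<in> PA" unfolding PA_def Parts_def using sorted pos sumlam lenlam by blast
    define f where "f = setf ys 0 r"
    have finys: "\<forall>C\<in>set ys. finite C" using ys finC by simp
    have fS: "f x \<in> S" for x
      unfolding S_def f_def using setf_fam[OF finys, of 0 r x] lamPA unfolding lam_def by blast
    have iff: "(x, y) \<in> r \<longleftrightarrow> f x \<subseteq> f y" if "x \<in> P" "y \<in> P" for x y
      unfolding f_def using setf_le[OF finys, of 0 r x y] chain_tcnt[OF po CC1(4) finC CC1(3) that] ys(1)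
      by simp
    have an: "antisym r" using po by (auto dest: partial_order_onD)
    have "inj_on f P"
    proof (rule inj_onI)
      fix x y assume "x \<in> P" "y \<in> P" "f x = f y"
      hence "(x, y) \<in> r" "(y, x) \<in> r" using iff by auto
      thus "x = y" using an by (auto dest: antisymD)
    qed
    thus ?thesis unfolding contains_poset_def using fS iff by blast
  qed
  show ?thesis using Ssub cardS emb by blast
qed

end
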